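(* Let $N\ge 1$, $p\in\,]0,2[$, $q\in[2,+\infty[$ and $(\alpha,\beta,\eta)\in\,]0,+\infty[^3$. Define $\Psi:\mathbb{R}^N\to\mathbb{R}$ by $$\Psi(\mathbf{x})=\log\left(\frac{\big(\ell_{p,\alpha}^p(\mathbf{x})+\beta^p\big)^{1/p}}{\ell_{q,\eta}(\mathbf{x})}\right),$$ where for $\mathbf{x}=(x_n)_{1\le n\le N}$, $\ell_{p,\alpha}^p(\mathbf{x})=\sum_{n=1}^N\big((x_n^2+\alpha^2)^{p/2}-\alpha^p\big)$ and $\ell_{q,\eta}(\mathbf{x})=\big(\eta^q+\sum_{n=1}^N|x_n|^q\big)^{1/q}$. Assume that either $q=2$ and $\eta^2\alpha^{p-2}>\beta^p$, or $q>2$. Then the Hessian $\nabla^2\Psi(\mathbf{0}_N)$ is a positive definite matrix and the zero vector $\mathbf{0}_N$ is a local minimizer of $\Psi$. In addition, if $$\eta^2\ \ge\ \beta^2\max\left\{\frac{8\alpha^{2-p}}{p(2+p)\beta^{2-p}},\ \frac{1}{(2^{p/2}-1)^{2/p}}\right\},$$ then $\mathbf{0}_N$ is a global minimizer of $\Psi$.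
   Context: $\Psi$ is the SPOQ (smoothed $\ell_p$-over-$\ell_q$) penalty. For $q=2$ the convention $0^0=1$ is used when computing $\nabla^2\ell_{q,\eta}^q(\mathbf{x})=q(q-1)\,\mathrm{Diag}\big((|x_n|^{q-2})_{n}\big)$ at $\mathbf{0}_N$. *)

theory Defs
  imports "HOL-Analysis.Analysis"
begin

definition lp_smooth :: "real \<Rightarrow> real \<Rightarrow> real^'n \<Rightarrow> real" where
  "lp_smooth p \<alpha> x = (\<Sum>n\<in>UNIV. ((x $ n)\<^sup>2 + \<alpha>\<^sup>2) powr (p / 2) - \<alpha> powr p)"

definition lq_smooth :: "real \<Rightarrow> real \<Rightarrow> real^'n \<Rightarrow> real" where
  "lq_smooth q \<eta> x = (\<eta> powr q + (\<Sum>n\<in>UNIV. \<bar>x $ n\<bar> powr q)) powr (1 / q)"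

definition SPOQ :: "real \<Rightarrow> real \<Rightarrow> real \<Rightarrow> real \<Rightarrow> real \<Rightarrow> real^'n \<Rightarrow> real" where
  "SPOQ p q \<alpha> \<beta> \<eta> x =
     ln ((lp_smooth p \<alpha> x + \<beta> powr p) powr (1 / p) / lq_smooth q \<eta> x)"

definition partial_deriv :: "(real^'n \<Rightarrow> real) \<Rightarrow> 'n \<Rightarrow> real^'n \<Rightarrow> real" where
  "partial_deriv f j y = frechet_derivative f (at y) (axis j 1)"

definition twice_differentiable_at :: "(real^'n \<Rightarrow> real) \<Rightarrow> real^'n \<Rightarrow> bool" where
  "twice_differentiable_at f x \<longleftrightarrow>
     (\<exists>e>0. \<forall>y\<in>ball x e. f differentiable (at y)) \<and>
     (\<forall>j. partial_deriv f j differentiable (at x))"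

definition hessian :: "(real^'n \<Rightarrow> real) \<Rightarrow> real^'n \<Rightarrow> real^'n^'n" where
  "hessian f x = (\<chi> i j. frechet_derivative (partial_deriv f j) (at x) (axis i 1))"

definition pos_def_matrix :: "real^'n^'n \<Rightarrow> bool" where
  "pos_def_matrix H \<longleftrightarrow> transpose H = H \<and> (\<forall>v. v \<noteq> 0 \<longrightarrow> v \<bullet> (H *v v) > 0)"

end

theory Submission
  imports Defs
begin


lemma four_point:
  fixes f :: "real \<Rightarrow> real"
  assumes cv: "convex_on I f" and I: "c \<in> I" "c + a + b \<in> I" and ab: "0 \<le> a" "0 \<le> b"
  shows "f (c + a) + f (c + b) \<le> f c + f (c + a + b)"
proof (cases "a + b = 0")
  case True then have "a = 0" "b = 0" using ab by linarith+
  then show ?thesis by simp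
next
  case False
  define \<mu> where "\<mu> = b / (a + b)"
  have m: "0 \<le> \<mu>" "\<mu> \<le> 1" using ab False by (auto simp: \<mu>_def field_simps)
  have q1: "(1 - \<mu>) * (a + b) = a" using False by (simp add: \<mu>_def field_simps)
  have q2: "\<mu> * (a + b) = b" using False by (simp add: \<mu>_def field_simps)
  have e1: "c + a = \<mu> * c + (1 - \<mu>) * (c + a + b)" using q1 by (simp add: algebra_simps)
  have e2: "c + b = (1 - \<mu>) * c + \<mu> * (c + a + b)" using q2 by (simp add: algebra_simps)
  have "f (\<mu> * c + (1 - \<mu>) * (c + a + b)) \<le> \<mu> * f c + (1 - \<mu>) * f (c + a + b)"
    using convex_onD[OF cv, of "1-\<mu>" c "c+a+b"] m I by simp
  then have "f (c + a) \<le> \<mu> * f c + (1 - \<mu>) * f (c + a + b)"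
    by (simp only: e1[symmetric])
  moreover have "f ((1 - \<mu>) * c + \<mu> * (c + a + b)) \<le> (1 - \<mu>) * f c + \<mu> * f (c + a + b)"
    using convex_onD[OF cv, of \<mu> c "c+a+b"] m I by simp
  then have "f (c + b) \<le> (1 - \<mu>) * f c + \<mu> * f (c + a + b)"
    by (simp only: e2[symmetric])
  ultimately show ?thesis by (simp add: algebra_simps)
qed

lemma powr_concave:
  assumes "0 < h" "h < 1"
  shows "concave_on {0<..} (\<lambda>x::real. x powr h)"
proof (rule f''_le0_imp_concave[where f'="\<lambda>x. h * x powr (h - 1)" and f''="\<lambda>x. h * ((h - 1) * x powr (h - 2))"])
  fix x :: real assume x: "x \<in> {0<..}"
  show "((\<lambda>x. x powr h) has_real_derivative h * x powr (h - 1)) (at x)"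
    using x by (auto intro!: derivative_eq_intros)
  show "((\<lambda>x. h * x powr (h - 1)) has_real_derivative h * ((h - 1) * x powr (h - 2))) (at x)"
    using x by (auto intro!: derivative_eq_intros simp: algebra_simps)
  show "h * ((h - 1) * x powr (h - 2)) \<le> 0"
    using x assms by (simp add: mult_nonneg_nonpos mult_nonpos_nonneg)
qed simp

lemma tangent_concave:
  fixes a b h :: real
  assumes "0 < h" "h < 1" "0 < a" "0 < b"
  shows "a powr h \<le> b powr h + h * b powr (h - 1) * (a - b)"
proof -
  have cv: "convex_on {0<..} (\<lambda>x::real. - (x powr h))"
    using powr_concave[OF assms(1,2)] by (simp add: concave_on_def)
  have d: "((\<lambda>x::real. - (x powr h)) has_field_derivative - (h * b powr (h - 1))) (at b within {0<..})"
    using assms by (auto intro!: derivative_eq_intros)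
  have "- (a powr h) - - (b powr h) \<ge> - (h * b powr (h - 1)) * (a - b)"
    by (rule convex_on_imp_above_tangent[OF cv _ _ _ d]) (use assms in \<open>auto simp: interior_open\<close>)
  then show ?thesis by (simp add: algebra_simps)
qed

lemma tangent_convex:
  fixes a b r :: real
  assumes "1 \<le> r" "0 < a" "0 < b"
  shows "b powr r + r * b powr (r - 1) * (a - b) \<le> a powr r"
proof -
  have cv: "convex_on {0<..} (\<lambda>x::real. x powr r)"
    using powr_convex[OF assms(1)] .
  have d: "((\<lambda>x::real. x powr r) has_field_derivative (r * b powr (r - 1))) (at b within {0<..})"
    using assms by (auto intro!: derivative_eq_intros)
  have "a powr r - b powr r \<ge> (r * b powr (r - 1)) * (a - b)"
    by (rule convex_on_imp_above_tangent[OF cv _ _ _ d]) (use assms in \<open>auto simp: interior_open\<close>)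
  then show ?thesis by (simp add: algebra_simps)
qed

lemma two_powr_ge:
  fixes h :: real
  assumes "0 \<le> h" "h \<le> 1"
  shows "h * (1 + h) \<le> 2 powr h"
proof -
  define d where "d = 1 - h"
  have l2: "ln 2 \<le> (1::real)" using ln_le_minus_one[of 2] by simp
  have "2 powr h = 2 * exp (- d * ln 2)"
    by (simp add: d_def powr_def exp_diff[symmetric] algebra_simps exp_diff)
  also have "\<dots> \<ge> 2 * (1 - d * ln 2)"
    using exp_ge_add_one_self[of "- d * ln 2"] by simp
  finally have 1: "2 * (1 - d * ln 2) \<le> 2 powr h" .
  have "0 \<le> d * (3 - 2 * ln 2 - d)"
    using assms l2 by (intro mult_nonneg_nonneg) (auto simp: d_def)
  then have "h * (1 + h) \<le> 2 * (1 - d * ln 2)"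
    by (simp add: d_def algebra_simps power2_eq_square)
  with 1 show ?thesis by linarith
qed

lemma big_t:
  fixes h u v :: real
  assumes "0 < h" "h < 1" "0 < v" "v \<le> u"
  shows "(2 powr h - 1) * u powr h \<le> (u + v) powr h - v powr h"
proof -
  have cv: "convex_on {0<..} (\<lambda>x::real. - (x powr h))"
    using powr_concave[OF assms(1,2)] by (simp add: concave_on_def)
  have "- ((v + (u - v)) powr h) + - ((v + u) powr h) \<le> - (v powr h) + - ((v + (u - v) + u) powr h)"
    by (rule four_point[OF cv]) (use assms in auto)
  moreover have "(v + (u - v) + u) = 2 * u" by simp
  ultimately have "(2 * u) powr h - u powr h \<le> (u + v) powr h - v powr h"
    by (simp add: algebra_simps)
  then show ?thesis by (simp add: powr_mult algebra_simps)
qed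

lemma superadd_simple:
  fixes x y r :: real
  assumes "1 \<le> r" "0 \<le> x" "0 \<le> y"
  shows "x powr r + y powr r \<le> (x + y) powr r"
proof (cases "x = 0 \<or> y = 0")
  case True then show ?thesis by auto
next
  case False
  then have xy: "0 < x" "0 < y" using assms by auto
  have "x powr r = x powr (r - 1) * x" using powr_add[of x "r - 1" 1] xy by simp
  also have "\<dots> \<le> (x + y) powr (r - 1) * x"
    using xy assms by (intro mult_right_mono powr_mono2) auto
  finally have 1: "x powr r \<le> (x + y) powr (r - 1) * x" .
  have "y powr r = y powr (r - 1) * y" using powr_add[of y "r - 1" 1] xy by simp
  also have "\<dots> \<le> (x + y) powr (r - 1) * y"
    using xy assms by (intro mult_right_mono powr_mono2) auto
  finally have 2: "y powr r \<le> (x + y) powr (r - 1) * y" .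
  have "(x + y) powr r = (x + y) powr (r - 1) * (x + y)" using powr_add[of "x + y" "r - 1" 1] xy by simp
  with 1 2 show ?thesis by (simp add: algebra_simps)
qed

lemma superadd_F:
  fixes c a b r :: real
  assumes "1 \<le> r" "0 < c" "0 \<le> a" "0 \<le> b"
  shows "((c + (a + b)) powr r - c powr r) \<ge> ((c + a) powr r - c powr r) + ((c + b) powr r - c powr r)"
  using four_point[OF powr_convex[OF assms(1)], of c "a" b] assms by (simp add: algebra_simps)

lemma superadd_F_sum:
  fixes c r :: real and g :: "'a \<Rightarrow> real"
  assumes "1 \<le> r" "0 < c" "finite A" "\<And>i. i \<in> A \<Longrightarrow> 0 \<le> g i"
  shows "(\<Sum>i\<in>A. (c + g i) powr r - c powr r) \<le> (c + (\<Sum>i\<in>A. g i)) powr r - c powr r"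
  using assms(3,4)
proof (induction A rule: finite_induct)
  case empty then show ?case by simp
next
  case (insert x F)
  have "(\<Sum>i\<in>insert x F. (c + g i) powr r - c powr r) = ((c + g x) powr r - c powr r) + (\<Sum>i\<in>F. (c + g i) powr r - c powr r)"
    using insert by simp
  also have "\<dots> \<le> ((c + g x) powr r - c powr r) + ((c + (\<Sum>i\<in>F. g i)) powr r - c powr r)"
    using insert by simp
  also have "\<dots> \<le> (c + (g x + (\<Sum>i\<in>F. g i))) powr r - c powr r"
    by (rule superadd_F) (use assms insert in \<open>auto intro: sum_nonneg\<close>)
  finally show ?case using insert by simp
qed



definition gf :: "real \<Rightarrow> real \<Rightarrow> real \<Rightarrow> real" where
  "gf p \<alpha> t = (t\<^sup>2 + \<alpha>\<^sup>2) powr (p / 2) - \<alpha> powr p"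

lemma sq_powr: "0 < (\<alpha>::real) \<Longrightarrow> (\<alpha>\<^sup>2) powr e = \<alpha> powr (2 * e)"
proof -
  assume a: "0 < \<alpha>"
  have "\<alpha> powr 2 = \<alpha>\<^sup>2" using a by (simp add: powr_numeral)
  then have "(\<alpha>\<^sup>2) powr e = (\<alpha> powr 2) powr e" by simp
  also have "\<dots> = \<alpha> powr (2 * e)" by (simp add: powr_powr)
  finally show ?thesis .
qed

lemma g_tangent:
  assumes "0 < p" "p < 2" "0 < \<alpha>"
  shows "(p / 2) * (t\<^sup>2 + \<alpha>\<^sup>2) powr (p / 2 - 1) * t\<^sup>2 \<le> gf p \<alpha> t"
proof -
  have b: "0 < t\<^sup>2 + \<alpha>\<^sup>2" using assms by (simp add: add_nonneg_pos)
  have "(\<alpha>\<^sup>2) powr (p/2) \<le> (t\<^sup>2 + \<alpha>\<^sup>2) powr (p/2) + (p/2) * (t\<^sup>2 + \<alpha>\<^sup>2) powr (p/2 - 1) * (\<alpha>\<^sup>2 - (t\<^sup>2 + \<alpha>\<^sup>2))"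
    by (rule tangent_concave) (use assms b in auto)
  moreover have "(\<alpha>\<^sup>2) powr (p/2) = \<alpha> powr p" using assms by (simp add: sq_powr)
  ultimately show ?thesis by (simp add: gf_def algebra_simps)
qed

lemma g_local:
  assumes "0 < p" "p < 2" "0 < \<alpha>"
  shows "(p / 2) * \<alpha> powr p * t\<^sup>2 / (t\<^sup>2 + \<alpha>\<^sup>2) \<le> gf p \<alpha> t"
proof -
  have b: "0 < t\<^sup>2 + \<alpha>\<^sup>2" using assms by (simp add: add_nonneg_pos)
  have e: "(t\<^sup>2 + \<alpha>\<^sup>2) powr (p / 2 - 1) = (t\<^sup>2 + \<alpha>\<^sup>2) powr (p / 2) / (t\<^sup>2 + \<alpha>\<^sup>2)"
    using b by (simp add: powr_diff)
  have m: "\<alpha> powr p \<le> (t\<^sup>2 + \<alpha>\<^sup>2) powr (p / 2)"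
  proof -
    have "(\<alpha>\<^sup>2) powr (p/2) \<le> (t\<^sup>2 + \<alpha>\<^sup>2) powr (p / 2)"
      using assms by (intro powr_mono2) auto
    then show ?thesis using assms by (simp add: sq_powr)
  qed
  have "(p / 2) * \<alpha> powr p * t\<^sup>2 / (t\<^sup>2 + \<alpha>\<^sup>2) \<le> (p / 2) * (t\<^sup>2 + \<alpha>\<^sup>2) powr (p / 2 - 1) * t\<^sup>2"
    unfolding e using m b assms
    by (simp add: divide_right_mono mult_right_mono mult_left_mono)
  also have "\<dots> \<le> gf p \<alpha> t" by (rule g_tangent[OF assms])
  finally show ?thesis .
qed

lemma g_nonneg:
  assumes "0 < p" "p < 2" "0 < \<alpha>"
  shows "0 \<le> gf p \<alpha> t"
proof -
  have "0 \<le> (p / 2) * \<alpha> powr p * t\<^sup>2 / (t\<^sup>2 + \<alpha>\<^sup>2)" using assms by simp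
  then show ?thesis using g_local[OF assms, of t] by linarith
qed

lemma g_zero: "0 < \<alpha> \<Longrightarrow> gf p \<alpha> 0 = 0"
  by (simp add: gf_def sq_powr)

lemma main1D:
  assumes p: "0 < p" "p < 2" and ab: "0 < \<alpha>" "0 < \<beta>"
  shows "t\<^sup>2 / max (8 * \<alpha> powr (2 - p) / (p * (2 + p) * \<beta> powr (2 - p)))
                   (1 / (2 powr (p / 2) - 1) powr (2 / p))
         \<le> (\<beta> powr p + gf p \<alpha> t) powr (2 / p) - \<beta>\<^sup>2"
proof -
  define A where "A = 8 * \<alpha> powr (2 - p) / (p * (2 + p) * \<beta> powr (2 - p))"
  define B where "B = 1 / (2 powr (p / 2) - 1) powr (2 / p)"
  define h where "h = p / 2"
  define c where "c = \<beta> powr p"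
  define g where "g = gf p \<alpha> t"
  have h: "0 < h" "h < 1" using p by (auto simp: h_def)
  have c: "0 < c" using ab by (simp add: c_def)
  have g0: "0 \<le> g" using g_nonneg[OF p ab(1)] by (simp add: g_def)
  have r1: "1 \<le> 2 / p" using p by simp
  have cr: "c powr (2 / p) = \<beta>\<^sup>2" using p ab by (simp add: c_def powr_powr powr_numeral)
  have h2: "1 < 2 powr h" using h by (simp add: less_powr_iff)
  have Apos: "0 < A" using p ab by (simp add: A_def)
  have Bpos: "0 < B" using h2 p by (simp add: B_def h_def)
  have t0: "0 \<le> t\<^sup>2" by simp
  show ?thesis
  proof (cases "t\<^sup>2 \<le> \<alpha>\<^sup>2")
    case True
    have "c powr (2/p) + (2/p) * c powr (2/p - 1) * ((c + g) - c) \<le> (c + g) powr (2/p)"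
      by (rule tangent_convex) (use r1 c g0 in auto)
    moreover have "c powr (2/p - 1) = \<beta> powr (2 - p)"
      using p ab by (simp add: c_def powr_powr algebra_simps)
    ultimately have 1: "(2/p) * \<beta> powr (2 - p) * g \<le> (c + g) powr (2/p) - \<beta>\<^sup>2"
      using cr by simp
    have "(t\<^sup>2 + \<alpha>\<^sup>2) powr (h - 1) \<ge> (2 * \<alpha>\<^sup>2) powr (h - 1)"
      using True h ab by (intro powr_mono2') (auto simp: add_nonneg_pos)
    moreover have "(2 * \<alpha>\<^sup>2) powr (h - 1) = 2 powr (h - 1) * \<alpha> powr (p - 2)"
      using ab by (simp add: powr_mult sq_powr h_def algebra_simps)
    moreover have "2 powr (h - 1) = 2 powr h / 2" by (simp add: powr_diff)
    moreover have "h * (1 + h) \<le> 2 powr h" using h by (intro two_powr_ge) auto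
    ultimately have "h * (1 + h) / 2 * \<alpha> powr (p - 2) \<le> (t\<^sup>2 + \<alpha>\<^sup>2) powr (h - 1)"
      by (smt (verit) divide_right_mono mult_right_mono powr_ge_zero)
    then have "h * (h * (1 + h) / 2 * \<alpha> powr (p - 2)) * t\<^sup>2 \<le> h * (t\<^sup>2 + \<alpha>\<^sup>2) powr (h - 1) * t\<^sup>2"
      using h by (intro mult_right_mono mult_left_mono) auto
    also have "\<dots> \<le> g" using g_tangent[OF p ab(1), of t] by (simp add: g_def h_def)
    finally have 2: "h * (h * (1 + h) / 2 * \<alpha> powr (p - 2)) * t\<^sup>2 \<le> g" .
    have "t\<^sup>2 / A = (2/p) * \<beta> powr (2 - p) * (h * (h * (1 + h) / 2 * \<alpha> powr (p - 2)) * t\<^sup>2)"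
      using p ab by (simp add: A_def h_def powr_diff field_simps)
    also have "\<dots> \<le> (2/p) * \<beta> powr (2 - p) * g"
      using 2 p by (intro mult_left_mono) auto
    finally have "t\<^sup>2 / A \<le> (c + g) powr (2/p) - \<beta>\<^sup>2" using 1 by linarith
    moreover have "t\<^sup>2 / max A B \<le> t\<^sup>2 / A"
      using Apos by (intro divide_left_mono) auto
    ultimately show ?thesis by (simp add: A_def B_def c_def g_def)
  next
    case False
    have 1: "c powr (2/p) + g powr (2/p) \<le> (c + g) powr (2/p)"
      by (rule superadd_simple) (use r1 c g0 in auto)
    have "(2 powr h - 1) * (t\<^sup>2) powr h \<le> (t\<^sup>2 + \<alpha>\<^sup>2) powr h - (\<alpha>\<^sup>2) powr h"
      by (rule big_t) (use h ab False in auto)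
    then have "(2 powr h - 1) * (t\<^sup>2) powr h \<le> g"
      using ab by (simp add: g_def gf_def h_def sq_powr)
    then have "((2 powr h - 1) * (t\<^sup>2) powr h) powr (2/p) \<le> g powr (2/p)"
      using h2 p by (intro powr_mono2) auto
    moreover have "((2 powr h - 1) * (t\<^sup>2) powr h) powr (2/p) = t\<^sup>2 / B"
      using h2 p by (simp add: powr_mult powr_powr B_def h_def powr_numeral)
    ultimately have "t\<^sup>2 / B \<le> (c + g) powr (2/p) - \<beta>\<^sup>2" using 1 cr by linarith
    moreover have "t\<^sup>2 / max A B \<le> t\<^sup>2 / B"
      using Bpos by (intro divide_left_mono) auto
    ultimately show ?thesis by (simp add: A_def B_def c_def g_def)
  qed
qed



lemma norm_sq_sum: "(norm (x::real^'n))\<^sup>2 = (\<Sum>n\<in>UNIV. (x $ n)\<^sup>2)"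
  unfolding power2_norm_eq_inner inner_vec_def by (simp add: power2_eq_square)

lemma lp_gf: "lp_smooth p \<alpha> x = (\<Sum>n\<in>UNIV. gf p \<alpha> (x $ n))"
  by (simp add: lp_smooth_def gf_def)

lemma lp_nonneg: "0 < p \<Longrightarrow> p < 2 \<Longrightarrow> 0 < \<alpha> \<Longrightarrow> 0 \<le> lp_smooth p \<alpha> x"
  unfolding lp_gf by (intro sum_nonneg g_nonneg) auto

lemma lp_zero: "0 < \<alpha> \<Longrightarrow> lp_smooth p \<alpha> (0::real^'n) = 0"
  unfolding lp_gf by (simp add: g_zero)

lemma lq_zero: "0 < \<eta> \<Longrightarrow> 0 < q \<Longrightarrow> lq_smooth q \<eta> (0::real^'n) = \<eta>"
  by (simp add: lq_smooth_def powr_powr)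

lemma S_nonneg: "0 \<le> (\<Sum>n\<in>UNIV. \<bar>(x::real^'n) $ n\<bar> powr q)"
  by (simp add: sum_nonneg)

lemma SPOQ_ln:
  assumes "0 < p" "p < 2" "0 < q" "0 < \<alpha>" "0 < \<beta>" "0 < \<eta>"
  shows "SPOQ p q \<alpha> \<beta> \<eta> (x::real^'n) =
    ln (lp_smooth p \<alpha> x + \<beta> powr p) / p - ln (\<eta> powr q + (\<Sum>n\<in>UNIV. \<bar>x $ n\<bar> powr q)) / q"
proof -
  have "0 < \<beta> powr p" using assms by simp
  then have a: "0 < lp_smooth p \<alpha> x + \<beta> powr p" using lp_nonneg[OF assms(1,2,4), of x] by linarith
  have "0 < \<eta> powr q" using assms by simp
  then have b: "0 < \<eta> powr q + (\<Sum>n\<in>UNIV. \<bar>x $ n\<bar> powr q)" using S_nonneg[of x q] by linarith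
  show ?thesis
    unfolding SPOQ_def lq_smooth_def using a b
    by (simp add: ln_div ln_powr)
qed

lemma abs_powr_sq: "\<bar>y::real\<bar> powr q = (y\<^sup>2) powr (q / 2)"
proof (cases "y = 0")
  case False
  then have "(\<bar>y\<bar>\<^sup>2) powr (q/2) = \<bar>y\<bar> powr (2 * (q/2))" by (intro sq_powr) auto
  then show ?thesis by simp
qed simp

lemma powr_le_lin:
  fixes a T e :: real
  assumes "0 \<le> a" "a \<le> T" "1 \<le> e"
  shows "a powr e \<le> a * T powr (e - 1)"
proof (cases "a = 0")
  case False
  then have "a powr e = a * a powr (e - 1)" using assms powr_add[of a 1 "e - 1"] by simp
  also have "\<dots> \<le> a * T powr (e - 1)" using assms by (intro mult_left_mono powr_mono2) auto
  finally show ?thesis .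
qed simp

lemma lq_le_l2:
  assumes "2 \<le> q" "0 < \<eta>"
  shows "lq_smooth q \<eta> (x::real^'n) \<le> sqrt (\<eta>\<^sup>2 + (\<Sum>n\<in>UNIV. (x $ n)\<^sup>2))"
proof -
  define T where "T = \<eta>\<^sup>2 + (\<Sum>n\<in>UNIV. (x $ n)\<^sup>2)"
  have T0: "0 < T" using assms by (simp add: T_def add_pos_nonneg sum_nonneg)
  have le: "(x $ n)\<^sup>2 \<le> T" for n
  proof -
    have "(x $ n)\<^sup>2 \<le> (\<Sum>n\<in>UNIV. (x $ n)\<^sup>2)" by (rule member_le_sum) auto
    then show ?thesis by (simp add: T_def add_increasing)
  qed
  have e: "1 \<le> q / 2" using assms by simp
  have 1: "\<eta> powr q \<le> \<eta>\<^sup>2 * T powr (q/2 - 1)"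
  proof -
    have "\<eta> powr q = (\<eta>\<^sup>2) powr (q/2)" using abs_powr_sq[of \<eta> q] assms by simp
    also have "\<dots> \<le> \<eta>\<^sup>2 * T powr (q/2 - 1)"
      by (rule powr_le_lin) (use e in \<open>auto simp: T_def sum_nonneg\<close>)
    finally show ?thesis .
  qed
  have 2: "\<bar>x $ n\<bar> powr q \<le> (x $ n)\<^sup>2 * T powr (q/2 - 1)" for n
    unfolding abs_powr_sq[of _ q] by (rule powr_le_lin) (use e le in auto)
  have "\<eta> powr q + (\<Sum>n\<in>UNIV. \<bar>x $ n\<bar> powr q) \<le> \<eta>\<^sup>2 * T powr (q/2 - 1) + (\<Sum>n\<in>UNIV. (x $ n)\<^sup>2 * T powr (q/2 - 1))"
    using 1 2 by (intro add_mono sum_mono) auto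
  also have "\<dots> = T * T powr (q/2 - 1)" by (simp add: T_def sum_distrib_right algebra_simps)
  also have "\<dots> = T powr (q/2)" using T0 powr_add[of T 1 "q/2 - 1"] by simp
  finally have 3: "\<eta> powr q + (\<Sum>n\<in>UNIV. \<bar>x $ n\<bar> powr q) \<le> T powr (q/2)" .
  have "lq_smooth q \<eta> x \<le> (T powr (q/2)) powr (1/q)"
    unfolding lq_smooth_def using 3 assms S_nonneg[of x q] by (intro powr_mono2) auto
  also have "\<dots> = sqrt T" using assms T0 by (simp add: powr_powr powr_half_sqrt)
  finally show ?thesis by (simp add: T_def)
qed

lemma SPOQ_zero:
  assumes "0 < p" "0 < q" "0 < \<alpha>" "0 < \<beta>" "0 < \<eta>"
  shows "SPOQ p q \<alpha> \<beta> \<eta> (0::real^'n) = ln (\<beta> / \<eta>)"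
  using assms by (simp add: SPOQ_def lp_zero lq_zero powr_powr)

lemma global_min:
  fixes p q \<alpha> \<beta> \<eta> :: real
  assumes p: "0 < p" "p < 2" and q: "2 \<le> q"
    and pos: "0 < \<alpha>" "0 < \<beta>" "0 < \<eta>"
    and H: "\<eta>\<^sup>2 \<ge> \<beta>\<^sup>2 * max (8 * \<alpha> powr (2 - p) / (p * (2 + p) * \<beta> powr (2 - p)))
                         (1 / (2 powr (p / 2) - 1) powr (2 / p))"
  shows "SPOQ p q \<alpha> \<beta> \<eta> 0 \<le> SPOQ p q \<alpha> \<beta> \<eta> (x::real^'n)"
proof -
  define M where "M = max (8 * \<alpha> powr (2 - p) / (p * (2 + p) * \<beta> powr (2 - p)))
                         (1 / (2 powr (p / 2) - 1) powr (2 / p))"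
  have M0: "0 < M" using p pos by (simp add: M_def less_max_iff_disj)
  define R where "R = (\<Sum>n\<in>UNIV. (x $ n)\<^sup>2)"
  define L where "L = lp_smooth p \<alpha> x"
  have R0: "0 \<le> R" by (simp add: R_def sum_nonneg)
  have L0: "0 \<le> L" using lp_nonneg[OF p pos(1)] by (simp add: L_def)
  have b0: "0 < \<beta> powr p" using pos by simp
  have "R / M = (\<Sum>n\<in>UNIV. (x $ n)\<^sup>2 / M)" by (simp add: R_def sum_divide_distrib)
  also have "\<dots> \<le> (\<Sum>n\<in>UNIV. (\<beta> powr p + gf p \<alpha> (x $ n)) powr (2 / p) - \<beta>\<^sup>2)"
    by (intro sum_mono) (use main1D[OF p pos(1,2)] in \<open>simp add: M_def\<close>)
  also have "\<dots> = (\<Sum>n\<in>UNIV. (\<beta> powr p + gf p \<alpha> (x $ n)) powr (2 / p) - (\<beta> powr p) powr (2 / p))"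
    using pos p by (simp add: powr_powr powr_numeral)
  also have "\<dots> \<le> (\<beta> powr p + L) powr (2 / p) - (\<beta> powr p) powr (2 / p)"
    unfolding L_def lp_gf by (rule superadd_F_sum) (use p pos g_nonneg in auto)
  also have "\<dots> = (\<beta> powr p + L) powr (2 / p) - \<beta>\<^sup>2"
    using pos p by (simp add: powr_powr powr_numeral)
  finally have 1: "R / M \<le> (\<beta> powr p + L) powr (2 / p) - \<beta>\<^sup>2" .
  have 2: "\<beta>\<^sup>2 * R \<le> \<eta>\<^sup>2 * (R / M)"
  proof -
    have "\<beta>\<^sup>2 * M \<le> \<eta>\<^sup>2" using H by (simp add: M_def)
    then have "\<beta>\<^sup>2 * M * R \<le> \<eta>\<^sup>2 * R" using R0 by (intro mult_right_mono)
    then show ?thesis using M0 by (simp add: field_simps)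
  qed
  define P where "P = (L + \<beta> powr p) powr (1 / p)"
  have Lb: "0 < L + \<beta> powr p" using L0 b0 by linarith
  have P0: "0 < P" using Lb unfolding P_def by (rule powr_gt_zero[THEN iffD2, OF less_imp_neq[symmetric]])
  have P2: "P\<^sup>2 = (\<beta> powr p + L) powr (2 / p)"
  proof -
    have "P\<^sup>2 = P powr 2" using P0 by (simp add: powr_numeral)
    also have "\<dots> = (L + \<beta> powr p) powr (2/p)" by (simp add: P_def powr_powr)
    finally show ?thesis by (simp add: add.commute)
  qed
  have 3: "\<beta>\<^sup>2 * (\<eta>\<^sup>2 + R) \<le> (\<eta> * P)\<^sup>2"
  proof -
    have "\<eta>\<^sup>2 * (R / M) \<le> \<eta>\<^sup>2 * ((\<beta> powr p + L) powr (2 / p) - \<beta>\<^sup>2)"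
      using 1 by (intro mult_left_mono) auto
    then show ?thesis using 2 P2 by (simp add: power_mult_distrib algebra_simps)
  qed
  define Q where "Q = lq_smooth q \<eta> x"
  have "0 < \<eta> powr q" using pos by simp
  then have "0 < \<eta> powr q + (\<Sum>n\<in>UNIV. \<bar>x $ n\<bar> powr q)" using S_nonneg[of x q] by linarith
  then have Q0: "0 < Q" unfolding Q_def lq_smooth_def by simp
  have "\<beta> * Q \<le> \<beta> * sqrt (\<eta>\<^sup>2 + R)"
    using lq_le_l2[OF q pos(3), of x] pos by (simp add: Q_def R_def)
  also have "\<dots> = sqrt (\<beta>\<^sup>2 * (\<eta>\<^sup>2 + R))" using pos by (simp add: real_sqrt_mult)
  also have "\<dots> \<le> sqrt ((\<eta> * P)\<^sup>2)" using 3 by (rule real_sqrt_le_mono)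
  also have "\<dots> = \<eta> * P" using pos P0 by simp
  finally have 4: "\<beta> * Q \<le> \<eta> * P" .
  have 5: "\<beta> / \<eta> \<le> P / Q" using 4 pos Q0 by (simp add: field_simps)
  have "SPOQ p q \<alpha> \<beta> \<eta> 0 = ln (\<beta> / \<eta>)" by (rule SPOQ_zero) (use p q pos in auto)
  also have "\<dots> \<le> ln (P / Q)" using 5 pos by (intro ln_mono) auto
  also have "\<dots> = SPOQ p q \<alpha> \<beta> \<eta> x" by (simp add: SPOQ_def P_def Q_def L_def)
  finally show ?thesis .
qed



lemma local_reduction:
  fixes L S b n p q :: real
  assumes "0 \<le> L" "0 \<le> S" "0 < b" "0 < n" "0 < p" "0 < q"
    and H: "S / (q * n) \<le> L / (p * (b + L))"
  shows "ln b / p - ln n / q \<le> ln (L + b) / p - ln (n + S) / q"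
proof -
  have 1: "L / (b + L) \<le> ln (L + b) - ln b"
  proof -
    have "ln (b / (L + b)) \<le> b / (L + b) - 1" using assms by (intro ln_le_minus_one) auto
    moreover have "b / (L + b) - 1 = - (L / (b + L))" using assms by (simp add: field_simps)
    moreover have "ln (b / (L + b)) = ln b - ln (L + b)" using assms by (simp add: ln_div)
    ultimately show ?thesis by linarith
  qed
  have 2: "ln (n + S) - ln n \<le> S / n"
  proof -
    have "ln ((n + S) / n) \<le> (n + S) / n - 1" using assms by (intro ln_le_minus_one) auto
    moreover have "(n + S) / n - 1 = S / n" using assms by (simp add: field_simps)
    moreover have "ln ((n + S) / n) = ln (n + S) - ln n" using assms by (simp add: ln_div)
    ultimately show ?thesis by linarith
  qed
  have "(ln (n + S) - ln n) / q \<le> (S / n) / q" using 2 assms by (intro divide_right_mono) auto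
  also have "\<dots> = S / (q * n)" by simp
  also have "\<dots> \<le> L / (p * (b + L))" by (rule H)
  also have "\<dots> = (L / (b + L)) / p" by simp
  also have "\<dots> \<le> (ln (L + b) - ln b) / p" using 1 assms by (intro divide_right_mono) auto
  finally show ?thesis by (simp add: diff_divide_distrib)
qed

lemma frac_mono:
  fixes u L b p :: real
  assumes "0 \<le> u" "u \<le> L" "0 < b" "0 < p"
  shows "u / (p * (b + u)) \<le> L / (p * (b + L))"
proof -
  have "u * (p * (b + L)) \<le> L * (p * (b + u))"
  proof -
    have "p * (u * b) \<le> p * (L * b)" using assms by (intro mult_left_mono mult_right_mono) auto
    then show ?thesis by (simp add: algebra_simps)
  qed
  then show ?thesis using assms by (simp add: divide_simps add_pos_nonneg)
qed

lemma L_lower: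
  assumes "0 < p" "p < 2" "0 < \<alpha>"
  shows "(p / 2) * \<alpha> powr p * (\<Sum>n\<in>UNIV. ((x::real^'n) $ n)\<^sup>2) / ((\<Sum>n\<in>UNIV. (x $ n)\<^sup>2) + \<alpha>\<^sup>2) \<le> lp_smooth p \<alpha> x"
proof -
  define R where "R = (\<Sum>n\<in>UNIV. (x $ n)\<^sup>2)"
  have le: "(x $ n)\<^sup>2 \<le> R" for n unfolding R_def by (rule member_le_sum) auto
  have "(p / 2) * \<alpha> powr p * R / (R + \<alpha>\<^sup>2) = (\<Sum>n\<in>UNIV. (p / 2) * \<alpha> powr p * (x $ n)\<^sup>2 / (R + \<alpha>\<^sup>2))"
    by (simp add: R_def sum_divide_distrib sum_distrib_left)
  also have "\<dots> \<le> (\<Sum>n\<in>UNIV. gf p \<alpha> (x $ n))"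
  proof (intro sum_mono)
    fix n
    have "(p / 2) * \<alpha> powr p * (x $ n)\<^sup>2 / (R + \<alpha>\<^sup>2) \<le> (p / 2) * \<alpha> powr p * (x $ n)\<^sup>2 / ((x $ n)\<^sup>2 + \<alpha>\<^sup>2)"
    proof (rule divide_left_mono)
      show "(x $ n)\<^sup>2 + \<alpha>\<^sup>2 \<le> R + \<alpha>\<^sup>2" using le[of n] by simp
      show "0 \<le> (p / 2) * \<alpha> powr p * (x $ n)\<^sup>2" using assms by simp
      have "0 < (x $ n)\<^sup>2 + \<alpha>\<^sup>2" using assms by (simp add: add_nonneg_pos)
      moreover have "0 < R + \<alpha>\<^sup>2" using assms le[of n] by (smt (verit) zero_le_power2 zero_less_power2)
      ultimately show "0 < (R + \<alpha>\<^sup>2) * ((x $ n)\<^sup>2 + \<alpha>\<^sup>2)" by simp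
    qed
    also have "\<dots> \<le> gf p \<alpha> (x $ n)" by (rule g_local[OF assms])
    finally show "(p / 2) * \<alpha> powr p * (x $ n)\<^sup>2 / (R + \<alpha>\<^sup>2) \<le> gf p \<alpha> (x $ n)" .
  qed
  finally show ?thesis by (simp add: R_def lp_gf)
qed

lemma arith_q2:
  fixes a s b E R p :: real
  assumes "0 < a" "0 < s" "0 < b" "0 < E" "0 \<le> R" "0 < p"
    and H: "R * (b + (p/2) * a) \<le> E * a - b * s"
  shows "R / (2 * E) \<le> ((p/2) * a * R / (R + s)) / (p * (b + (p/2) * a * R / (R + s)))"
proof -
  have Rs: "0 < R + s" using assms by simp
  define D where "D = b * (R + s) + (p/2) * a * R"
  have D: "0 < b * (R + s) + (p/2) * a * R" using assms Rs by (simp add: add_pos_nonneg)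
  have 1: "b + (p/2) * a * R / (R + s) = D / (R + s)" using Rs by (simp add: D_def field_simps)
  have "((p/2) * a * R / (R + s)) / (p * (b + (p/2) * a * R / (R + s))) = ((p/2) * a * R / (R + s)) / (p * D / (R + s))"
    unfolding 1 by (simp only: times_divide_eq_right)
  also have "\<dots> = ((p/2) * a * R) / (p * D)" using Rs by (simp add: divide_simps)
  also have "\<dots> = a * R / (2 * D)"
  proof -
    have D': "0 < D" using D by (simp add: D_def)
    show ?thesis using assms D' by (simp add: field_simps)
  qed
  finally have e: "((p/2) * a * R / (R + s)) / (p * (b + (p/2) * a * R / (R + s))) = a * R / (2 * (b * (R + s) + (p/2) * a * R))"
    by (simp add: D_def)
  have "b * (R + s) + (p/2) * a * R \<le> E * a" using H by (simp add: algebra_simps)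
  then have "(2 * R) * (b * (R + s) + (p/2) * a * R) \<le> (2 * R) * (E * a)"
    using assms by (intro mult_left_mono) auto
  then have "R * (2 * (b * (R + s) + (p/2) * a * R)) \<le> (a * R) * (2 * E)"
    by (simp add: algebra_simps)
  then have "R / (2 * E) \<le> a * R / (2 * (b * (R + s) + (p/2) * a * R))"
    using D assms by (simp add: divide_simps)
  then show ?thesis using e by simp
qed

lemma S_zero: "0 < q \<Longrightarrow> (\<Sum>n\<in>UNIV. \<bar>(0::real^'n) $ n\<bar> powr q) = 0"
  by simp

lemma abs_powr_split:
  fixes y \<rho> q :: real
  assumes "\<bar>y\<bar> \<le> \<rho>" "2 \<le> q"
  shows "\<bar>y\<bar> powr q \<le> y\<^sup>2 * \<rho> powr (q - 2)"
proof (cases "y = 0")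
  case False
  have "\<bar>y\<bar> powr q = \<bar>y\<bar> powr 2 * \<bar>y\<bar> powr (q - 2)" using powr_add[of "\<bar>y\<bar>" 2 "q - 2"] by simp
  also have "\<dots> = y\<^sup>2 * \<bar>y\<bar> powr (q - 2)" using False by (simp add: powr_numeral)
  also have "\<dots> \<le> y\<^sup>2 * \<rho> powr (q - 2)" using assms by (intro mult_left_mono powr_mono2) auto
  finally show ?thesis .
qed simp



lemma suff:
  fixes x :: "real^'n"
  assumes p: "0 < p" "p < 2" and q: "2 \<le> q" and pos: "0 < \<alpha>" "0 < \<beta>" "0 < \<eta>"
    and L0: "0 \<le> L0" "L0 \<le> lp_smooth p \<alpha> x"
    and H: "(\<Sum>n\<in>UNIV. \<bar>x $ n\<bar> powr q) / (q * \<eta> powr q) \<le> L0 / (p * (\<beta> powr p + L0))"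
  shows "SPOQ p q \<alpha> \<beta> \<eta> (0::real^'n) \<le> SPOQ p q \<alpha> \<beta> \<eta> x"
proof -
  have q0: "0 < q" using q by simp
  have "SPOQ p q \<alpha> \<beta> \<eta> (0::real^'n) = ln (\<beta> powr p) / p - ln (\<eta> powr q) / q"
    using SPOQ_ln[OF p q0 pos, of 0] pos q0 by (simp add: lp_zero)
  also have "\<dots> \<le> ln (lp_smooth p \<alpha> x + \<beta> powr p) / p - ln (\<eta> powr q + (\<Sum>n\<in>UNIV. \<bar>x $ n\<bar> powr q)) / q"
  proof (rule local_reduction)
    show "0 \<le> lp_smooth p \<alpha> x" using L0 by linarith
    show "(\<Sum>n\<in>UNIV. \<bar>x $ n\<bar> powr q) / (q * \<eta> powr q) \<le> lp_smooth p \<alpha> x / (p * (\<beta> powr p + lp_smooth p \<alpha> x))"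
      using H frac_mono[of L0 "lp_smooth p \<alpha> x" "\<beta> powr p" p] L0 p pos by simp
  qed (use pos p q0 S_nonneg in auto)
  also have "\<dots> = SPOQ p q \<alpha> \<beta> \<eta> x" using SPOQ_ln[OF p q0 pos, of x] by simp
  finally show ?thesis .
qed

lemma zero_swap:
  "0 < p \<Longrightarrow> 0 < q \<Longrightarrow> 0 < \<alpha> \<Longrightarrow> 0 < \<beta> \<Longrightarrow> 0 < \<eta> \<Longrightarrow>
   SPOQ p q \<alpha> \<beta> \<eta> (0::real^'a) = SPOQ p q \<alpha> \<beta> \<eta> (0::real^'b)"
  by (simp add: SPOQ_zero)

lemma local_min:
  fixes p q \<alpha> \<beta> \<eta> :: real
  assumes p: "0 < p" "p < 2" and q: "2 \<le> q"
    and pos: "0 < \<alpha>" "0 < \<beta>" "0 < \<eta>"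
    and H7: "(q = 2 \<and> \<eta>\<^sup>2 * \<alpha> powr (p - 2) > \<beta> powr p) \<or> q > 2"
  shows "\<exists>e>0. \<forall>x::real^'n. norm x < e \<longrightarrow> SPOQ p q \<alpha> \<beta> \<eta> 0 \<le> SPOQ p q \<alpha> \<beta> \<eta> x"
proof -
  define b where "b = \<beta> powr p"
  define a where "a = \<alpha> powr p"
  have b0: "0 < b" and a0: "0 < a" using pos by (auto simp: a_def b_def)
  have L0prop: "0 \<le> (p/2) * a * (norm x)\<^sup>2 / ((norm x)\<^sup>2 + \<alpha>\<^sup>2) \<and> (p/2) * a * (norm x)\<^sup>2 / ((norm x)\<^sup>2 + \<alpha>\<^sup>2) \<le> lp_smooth p \<alpha> x" for x :: "real^'n"
  proof
    show "0 \<le> (p/2) * a * (norm x)\<^sup>2 / ((norm x)\<^sup>2 + \<alpha>\<^sup>2)" using p a0 by simp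
    show "(p/2) * a * (norm x)\<^sup>2 / ((norm x)\<^sup>2 + \<alpha>\<^sup>2) \<le> lp_smooth p \<alpha> x"
      using L_lower[OF p pos(1), of x] by (simp add: norm_sq_sum a_def)
  qed
  show ?thesis
  proof (cases "q = 2")
    case True
    then have H: "\<eta>\<^sup>2 * \<alpha> powr (p - 2) > b" using H7 by (simp add: b_def)
    have ap: "\<alpha> powr (p - 2) * \<alpha>\<^sup>2 = a"
      using pos powr_add[of \<alpha> "p - 2" 2] by (simp add: a_def powr_numeral)
    have "\<eta>\<^sup>2 * \<alpha> powr (p - 2) * \<alpha>\<^sup>2 > b * \<alpha>\<^sup>2" using H pos by simp
    moreover have "\<eta>\<^sup>2 * \<alpha> powr (p - 2) * \<alpha>\<^sup>2 = \<eta>\<^sup>2 * a" using ap by (simp add: mult.assoc)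
    ultimately have Hp: "\<eta>\<^sup>2 * a - b * \<alpha>\<^sup>2 > 0" by linarith
    define den where "den = b + (p/2) * a"
    have den0: "0 < den" using b0 a0 p by (simp add: den_def add_pos_pos)
    define \<delta> where "\<delta> = (\<eta>\<^sup>2 * a - b * \<alpha>\<^sup>2) / den"
    have d0: "0 < \<delta>" using Hp den0 by (simp add: \<delta>_def)
    show ?thesis
    proof (intro exI[of _ "sqrt \<delta>"] conjI allI impI)
      show "0 < sqrt \<delta>" using d0 by simp
      fix x :: "real^'n"
      assume nx: "norm x < sqrt \<delta>"
      define R where "R = (norm x)\<^sup>2"
      have R0: "0 \<le> R" by (simp add: R_def)
      have "R < (sqrt \<delta>)\<^sup>2" unfolding R_def using nx by (intro power_strict_mono) auto
      then have Rd: "R < \<delta>" using d0 by simp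
      have S: "(\<Sum>n\<in>UNIV. \<bar>x $ n\<bar> powr q) = R"
        using True by (simp add: abs_powr_sq R_def norm_sq_sum)
      have eq: "\<eta> powr q = \<eta>\<^sup>2" using True pos by (simp add: powr_numeral)
      have "R * den \<le> \<delta> * den" using Rd den0 by simp
      then have cond: "R * (b + (p/2) * a) \<le> \<eta>\<^sup>2 * a - b * \<alpha>\<^sup>2"
        using den0 by (simp add: \<delta>_def den_def)
      have ar: "R / (2 * \<eta>\<^sup>2) \<le> ((p/2) * a * R / (R + \<alpha>\<^sup>2)) / (p * (b + (p/2) * a * R / (R + \<alpha>\<^sup>2)))"
        by (rule arith_q2[OF a0 _ b0 _ R0 p(1) cond]) (use pos in auto)
      have key: "(\<Sum>n\<in>UNIV. \<bar>x $ n\<bar> powr q) / (q * \<eta> powr q) \<le> ((p/2) * a * R / (R + \<alpha>\<^sup>2)) / (p * (\<beta> powr p + (p/2) * a * R / (R + \<alpha>\<^sup>2)))"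
      proof -
        have "(\<Sum>n\<in>UNIV. \<bar>x $ n\<bar> powr q) / (q * \<eta> powr q) = R / (2 * \<eta>\<^sup>2)"
          unfolding S eq using True by simp
        then show ?thesis using ar by (simp add: b_def)
      qed
      have "SPOQ p q \<alpha> \<beta> \<eta> (0::real^'n) \<le> SPOQ p q \<alpha> \<beta> \<eta> x"
        by (rule suff[OF p q pos _ _ key]) (use L0prop[of x] in \<open>auto simp: R_def\<close>)
      then show "SPOQ p q \<alpha> \<beta> \<eta> 0 \<le> SPOQ p q \<alpha> \<beta> \<eta> x"
        using zero_swap[OF p(1) _ pos, of q] q by (metis less_le_trans zero_less_numeral)
    qed
  next
    case False
    then have q2: "q > 2" using q by simp
    define K where "K = (p/2) * a / \<alpha>\<^sup>2"
    have K0: "0 < K" using p a0 pos by (simp add: K_def)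
    define c1 where "c1 = q * \<eta> powr q * a / (2 * (1 + \<alpha>\<^sup>2) * (b + K))"
    have c10: "0 < c1" using q2 pos a0 b0 K0 by (simp add: c1_def add_pos_pos)
    define e where "e = min 1 (c1 powr (1 / (q - 2)))"
    show ?thesis
    proof (intro exI[of _ e] conjI allI impI)
      show "0 < e" using c10 by (simp add: e_def)
      fix x :: "real^'n"
      assume nx: "norm x < e"
      define \<rho> where "\<rho> = norm x"
      define R where "R = \<rho>\<^sup>2"
      have r0: "0 \<le> \<rho>" by (simp add: \<rho>_def)
      have r1: "\<rho> \<le> 1" using nx by (simp add: e_def \<rho>_def)
      have R0: "0 \<le> R" by (simp add: R_def)
      have R1: "R \<le> 1" using r0 r1 by (simp add: R_def power_le_one)
      have "\<rho> powr (q - 2) \<le> (c1 powr (1 / (q - 2))) powr (q - 2)"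
        using nx q2 r0 by (intro powr_mono2) (auto simp: e_def \<rho>_def)
      also have "\<dots> = c1" using q2 c10 by (simp add: powr_powr)
      finally have rc: "\<rho> powr (q - 2) \<le> c1" .
      have "(\<Sum>n\<in>UNIV. \<bar>x $ n\<bar> powr q) \<le> (\<Sum>n\<in>UNIV. (x $ n)\<^sup>2 * \<rho> powr (q - 2))"
        by (intro sum_mono abs_powr_split) (use q component_le_norm_cart in \<open>auto simp: \<rho>_def\<close>)
      also have "\<dots> = R * \<rho> powr (q - 2)" by (simp add: R_def \<rho>_def norm_sq_sum sum_distrib_right)
      also have "\<dots> \<le> R * c1" using rc R0 by (intro mult_left_mono)
      finally have S: "(\<Sum>n\<in>UNIV. \<bar>x $ n\<bar> powr q) \<le> R * c1" .
      define L0 where "L0 = (p/2) * a * R / (R + \<alpha>\<^sup>2)"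
      define L1 where "L1 = (p/2) * a * R / (1 + \<alpha>\<^sup>2)"
      have Ra: "0 < R + \<alpha>\<^sup>2" using R0 pos by (simp add: add_nonneg_pos)
      have Ra2: "0 < (R + \<alpha>\<^sup>2) * \<alpha>\<^sup>2" using Ra pos by simp
      have a2: "0 < \<alpha>\<^sup>2" "0 < 1 + \<alpha>\<^sup>2" using pos by (auto simp: add_pos_nonneg)
      have L0K: "L0 \<le> K"
      proof -
        have "L0 \<le> (p/2) * a * R / \<alpha>\<^sup>2" unfolding L0_def
          using p a0 pos R0 by (intro divide_left_mono[OF _ _ Ra2]) auto
        also have "\<dots> \<le> (p/2) * a * 1 / \<alpha>\<^sup>2" using p a0 pos R1
          by (intro divide_right_mono mult_left_mono) auto
        finally show ?thesis by (simp add: K_def)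
      qed
      have Ra3: "0 < (1 + \<alpha>\<^sup>2) * (R + \<alpha>\<^sup>2)" using Ra a2 by simp
      have L10: "L1 \<le> L0" unfolding L0_def L1_def
        using p a0 pos R0 R1 by (intro divide_left_mono[OF _ _ Ra3]) auto
      have L0p: "0 \<le> L0" using p a0 pos R0 by (simp add: L0_def)
      have "(\<Sum>n\<in>UNIV. \<bar>x $ n\<bar> powr q) / (q * \<eta> powr q) \<le> R * c1 / (q * \<eta> powr q)"
        using S q2 pos by (intro divide_right_mono) auto
      also have "\<dots> = L1 / (p * (b + K))"
      proof -
        have n1: "0 < \<eta> powr q" "0 < q" "0 < b + K" "0 < 1 + \<alpha>\<^sup>2" "0 < p" using pos q2 b0 K0 p by (auto simp: add_pos_nonneg)
        have gen: "\<And>Q D. 0 < Q \<Longrightarrow> R * (Q * a / D) / Q = R * a / D" by simp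
        have e1: "R * c1 / (q * \<eta> powr q) = R * a / (2 * (1 + \<alpha>\<^sup>2) * (b + K))"
          unfolding c1_def by (rule gen) (use n1 in simp)
        have gen2: "\<And>X Y. 0 < X \<Longrightarrow> 0 < Y \<Longrightarrow> ((p/2) * a * R / X) / (p * Y) = R * a / (2 * X * Y)"
          using n1 by (simp add: field_simps)
        have e2: "L1 / (p * (b + K)) = R * a / (2 * (1 + \<alpha>\<^sup>2) * (b + K))"
          unfolding L1_def by (rule gen2) (use n1 in auto)
        show ?thesis by (simp only: e1 e2)
      qed
      also have "\<dots> \<le> L0 / (p * (b + K))"
        using L10 p b0 K0 by (intro divide_right_mono) auto
      also have "\<dots> \<le> L0 / (p * (b + L0))"
        using L0K L0p p b0 by (intro divide_left_mono mult_left_mono mult_pos_pos add_pos_nonneg) auto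
      finally have fin: "(\<Sum>n\<in>UNIV. \<bar>x $ n\<bar> powr q) / (q * \<eta> powr q) \<le> L0 / (p * (b + L0))" .
      have "SPOQ p q \<alpha> \<beta> \<eta> (0::real^'n) \<le> SPOQ p q \<alpha> \<beta> \<eta> x"
        using L0prop[of x] fin
        by (intro suff[OF p q pos, of L0]) (auto simp: L0_def R_def \<rho>_def b_def)
      then show "SPOQ p q \<alpha> \<beta> \<eta> 0 \<le> SPOQ p q \<alpha> \<beta> \<eta> x"
        using zero_swap[OF p(1) _ pos, of q] q by (metis less_le_trans zero_less_numeral)
    qed
  qed
qed



definition af :: "real \<Rightarrow> real \<Rightarrow> real \<Rightarrow> real" where
  "af p \<alpha> t = (t\<^sup>2 + \<alpha>\<^sup>2) powr (p / 2 - 1)"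

definition dq :: "real \<Rightarrow> real \<Rightarrow> real" where
  "dq q t = t * \<bar>t\<bar> powr (q - 2)"

lemma comp_nth:
  assumes "(f has_real_derivative D) (at (x $ n))"
  shows "((\<lambda>y::real^'n. f (y $ n)) has_derivative (\<lambda>v. v $ n * D)) (at x)"
  using DERIV_compose_FDERIV[OF assms bounded_linear_imp_has_derivative[OF bounded_linear_vec_nth]] .

lemma gf_deriv:
  assumes "0 < \<alpha>"
  shows "(gf p \<alpha> has_real_derivative p * t * af p \<alpha> t) (at t)"
proof -
  have pos: "0 < t\<^sup>2 + \<alpha>\<^sup>2" using assms by (simp add: add_nonneg_pos)
  have "((\<lambda>t. (t\<^sup>2 + \<alpha>\<^sup>2) powr (p / 2) - \<alpha> powr p) has_real_derivative
      (p / 2) * (t\<^sup>2 + \<alpha>\<^sup>2) powr (p / 2 - 1) * (2 * t)) (at t)"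
    using pos by (auto intro!: derivative_eq_intros simp: power2_eq_square algebra_simps)
  then show ?thesis unfolding gf_def[abs_def] af_def by (simp add: algebra_simps)
qed

lemma af_deriv:
  assumes "0 < \<alpha>"
  shows "\<exists>D. (af p \<alpha> has_real_derivative D) (at t)"
proof -
  have pos: "0 < t\<^sup>2 + \<alpha>\<^sup>2" using assms by (simp add: add_nonneg_pos)
  show ?thesis unfolding af_def[abs_def]
    by (rule exI, rule derivative_intros) (use pos in \<open>auto intro!: derivative_intros\<close>)
qed

lemma abs_powr_tendsto0:
  assumes "0 < e"
  shows "((\<lambda>h::real. \<bar>h\<bar> powr e) \<longlongrightarrow> 0) (at 0)"
proof (rule tendsto_zero_powrI)
  show "((\<lambda>h::real. \<bar>h\<bar>) \<longlongrightarrow> 0) (at 0)"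
    using tendsto_rabs_zero[OF tendsto_ident_at] by simp
qed (use assms in auto)

lemma H_deriv:
  assumes q: "2 \<le> q"
  shows "((\<lambda>t. \<bar>t\<bar> powr q) has_real_derivative q * dq q t) (at t)"
proof (cases "t = 0")
  case True
  have e: "(\<lambda>h. (\<bar>0 + h\<bar> powr q - \<bar>0\<bar> powr q) / h) = (\<lambda>h. sgn h * \<bar>h\<bar> powr (q - 1))"
  proof
    fix h :: real
    show "(\<bar>0 + h\<bar> powr q - \<bar>0\<bar> powr q) / h = sgn h * \<bar>h\<bar> powr (q - 1)"
    proof (cases "h = 0")
      case False
      have "\<bar>h\<bar> powr q = \<bar>h\<bar> * \<bar>h\<bar> powr (q - 1)" using False powr_add[of "\<bar>h\<bar>" 1 "q - 1"] by simp
      moreover have "\<bar>h\<bar> / h = sgn h" using False by (simp add: sgn_if)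
      ultimately show ?thesis using False q by (simp add: field_simps)
    qed simp
  qed
  have "((\<lambda>h. sgn h * \<bar>h\<bar> powr (q - 1)) \<longlongrightarrow> 0) (at (0::real))"
  proof (rule tendsto_norm_zero_cancel)
    have "((\<lambda>h::real. \<bar>h\<bar> powr (q - 1)) \<longlongrightarrow> 0) (at 0)" using q by (intro abs_powr_tendsto0) auto
    moreover have "\<forall>\<^sub>F h in at (0::real). norm (sgn h * \<bar>h\<bar> powr (q - 1)) = \<bar>h\<bar> powr (q - 1)"
      by (auto simp: eventually_at_filter abs_mult)
    ultimately show "((\<lambda>h::real. norm (sgn h * \<bar>h\<bar> powr (q - 1))) \<longlongrightarrow> 0) (at 0)"
      by (simp add: tendsto_cong)
  qed
  then have "((\<lambda>t. \<bar>t\<bar> powr q) has_real_derivative 0) (at 0)" unfolding DERIV_def e .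
  then show ?thesis using True by (simp add: dq_def)
next
  case False
  have ext: "(\<lambda>t::real. \<bar>t\<bar> powr q) = (\<lambda>t. (t\<^sup>2) powr (q / 2))" by (simp add: abs_powr_sq)
  have pos: "0 < t\<^sup>2" using False by simp
  have "((\<lambda>t. (t\<^sup>2) powr (q / 2)) has_real_derivative (q / 2) * (t\<^sup>2) powr (q / 2 - 1) * (2 * t)) (at t)"
    using pos by (auto intro!: derivative_eq_intros simp: power2_eq_square algebra_simps)
  moreover have "(t\<^sup>2) powr (q / 2 - 1) = \<bar>t\<bar> powr (q - 2)"
    using abs_powr_sq[of t "q - 2"] by (simp add: diff_divide_distrib)
  ultimately show ?thesis unfolding ext dq_def by (simp add: algebra_simps)
qed

lemma dq_deriv0:
  assumes q: "2 \<le> q"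
  shows "(dq q has_real_derivative (if q = 2 then 1 else 0)) (at 0)"
proof (cases "q = 2")
  case True
  have "dq q = (\<lambda>t. t)" using True by (auto simp: dq_def)
  then show ?thesis using True by (simp add: DERIV_ident)
next
  case False
  then have q2: "2 < q" using q by simp
  have e: "(\<lambda>h. (dq q (0 + h) - dq q 0) / h) = (\<lambda>h. \<bar>h\<bar> powr (q - 2))"
    by (auto simp: dq_def)
  show ?thesis using False unfolding DERIV_def e
    using abs_powr_tendsto0[of "q - 2"] q2 by simp
qed



lemma L_deriv:
  assumes "0 < \<alpha>"
  shows "(lp_smooth p \<alpha> has_derivative (\<lambda>v. \<Sum>n\<in>UNIV. v $ n * (p * (x $ n) * af p \<alpha> (x $ n)))) (at (x::real^'n))"
proof -
  have e: "lp_smooth p \<alpha> = (\<lambda>x::real^'n. \<Sum>n\<in>UNIV. gf p \<alpha> (x $ n))" by (simp add: lp_gf[abs_def])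
  show ?thesis unfolding e
    by (intro has_derivative_sum comp_nth gf_deriv assms)
qed

lemma S_deriv:
  assumes "2 \<le> q"
  shows "((\<lambda>x. \<Sum>n\<in>UNIV. \<bar>x $ n\<bar> powr q) has_derivative (\<lambda>v. \<Sum>n\<in>UNIV. v $ n * (q * dq q (x $ n)))) (at (x::real^'n))"
  by (intro has_derivative_sum comp_nth[of "\<lambda>t. \<bar>t\<bar> powr q"] H_deriv assms)

definition Lb :: "real \<Rightarrow> real \<Rightarrow> real \<Rightarrow> real^'n \<Rightarrow> real" where "Lb p \<alpha> \<beta> x = lp_smooth p \<alpha> x + \<beta> powr p"
definition Sb :: "real \<Rightarrow> real \<Rightarrow> real^'n \<Rightarrow> real" where "Sb q \<eta> x = \<eta> powr q + (\<Sum>n\<in>UNIV. \<bar>x $ n\<bar> powr q)"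

lemma SPOQ_fun:
  assumes "0 < p" "p < 2" "0 < q" "0 < \<alpha>" "0 < \<beta>" "0 < \<eta>"
  shows "(SPOQ p q \<alpha> \<beta> \<eta> :: real^'n \<Rightarrow> real) = (\<lambda>x. (1 / p) * ln (Lb p \<alpha> \<beta> x) - (1 / q) * ln (Sb q \<eta> x))"
  by (rule ext) (simp add: SPOQ_ln[OF assms] Lb_def Sb_def)

lemma Lb_pos: "0 < p \<Longrightarrow> p < 2 \<Longrightarrow> 0 < \<alpha> \<Longrightarrow> 0 < \<beta> \<Longrightarrow> 0 < Lb p \<alpha> \<beta> x"
  using lp_nonneg[of p \<alpha> x] by (simp add: Lb_def add_nonneg_pos)

lemma Sb_pos: "0 < \<eta> \<Longrightarrow> 0 < Sb q \<eta> x"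
  using S_nonneg[of x q] by (simp add: Sb_def add_pos_nonneg)

lemma Psi_deriv:
  assumes p: "0 < p" "p < 2" and q: "2 \<le> q" and pos: "0 < \<alpha>" "0 < \<beta>" "0 < \<eta>"
  shows "(SPOQ p q \<alpha> \<beta> \<eta> has_derivative
     (\<lambda>v. (1 / p) * ((\<Sum>n\<in>UNIV. v $ n * (p * (x $ n) * af p \<alpha> (x $ n))) * inverse (Lb p \<alpha> \<beta> x))
        - (1 / q) * ((\<Sum>n\<in>UNIV. v $ n * (q * dq q (x $ n))) * inverse (Sb q \<eta> x)))) (at (x::real^'n))"
proof -
  have q0: "0 < q" using q by simp
  have dL: "(Lb p \<alpha> \<beta> has_derivative (\<lambda>v. (\<Sum>n\<in>UNIV. v $ n * (p * (x $ n) * af p \<alpha> (x $ n))) + 0)) (at x)"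
    unfolding Lb_def[abs_def] by (intro has_derivative_add L_deriv pos has_derivative_const)
  have dS: "(Sb q \<eta> has_derivative (\<lambda>v. 0 + (\<Sum>n\<in>UNIV. v $ n * (q * dq q (x $ n))))) (at x)"
    unfolding Sb_def[abs_def] by (intro has_derivative_add S_deriv q has_derivative_const)
  have "((\<lambda>x. (1 / p) * ln (Lb p \<alpha> \<beta> x) - (1 / q) * ln (Sb q \<eta> x)) has_derivative
     (\<lambda>v. (1 / p) * (((\<Sum>n\<in>UNIV. v $ n * (p * (x $ n) * af p \<alpha> (x $ n))) + 0) * inverse (Lb p \<alpha> \<beta> x))
        - (1 / q) * ((0 + (\<Sum>n\<in>UNIV. v $ n * (q * dq q (x $ n)))) * inverse (Sb q \<eta> x)))) (at x)"
    by (intro has_derivative_diff has_derivative_mult_right has_derivative_ln Lb_pos Sb_pos dL dS p pos)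
  then show ?thesis
    unfolding SPOQ_fun[OF p q0 pos] by simp
qed

lemma sum_axis: "(\<Sum>n\<in>UNIV. axis j 1 $ n * c n) = (c j :: real)"
proof -
  have e: "(\<lambda>n. axis j 1 $ n * c n) = (\<lambda>n. if n = j then c n else 0)" by (auto simp: axis_def)
  show ?thesis unfolding e by simp
qed

definition Pj where
  "Pj p q \<alpha> \<beta> \<eta> j y = (y $ j) * af p \<alpha> (y $ j) * inverse (Lb p \<alpha> \<beta> y) - dq q (y $ j) * inverse (Sb q \<eta> y)"

lemma partial_eq:
  assumes p: "0 < p" "p < 2" and q: "2 \<le> q" and pos: "0 < \<alpha>" "0 < \<beta>" "0 < \<eta>"
  shows "partial_deriv (SPOQ p q \<alpha> \<beta> \<eta> :: real^'n \<Rightarrow> real) j = Pj p q \<alpha> \<beta> \<eta> j"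
proof
  fix y :: "real^'n"
  have "partial_deriv (SPOQ p q \<alpha> \<beta> \<eta>) j y =
     (1 / p) * ((\<Sum>n\<in>UNIV. axis j 1 $ n * (p * (y $ n) * af p \<alpha> (y $ n))) * inverse (Lb p \<alpha> \<beta> y))
        - (1 / q) * ((\<Sum>n\<in>UNIV. axis j 1 $ n * (q * dq q (y $ n))) * inverse (Sb q \<eta> y))"
    unfolding partial_deriv_def frechet_derivative_at[OF Psi_deriv[OF p q pos, of y], symmetric] by simp
  also have "\<dots> = Pj p q \<alpha> \<beta> \<eta> j y"
    using p q by (simp add: Pj_def sum_axis)
  finally show "partial_deriv (SPOQ p q \<alpha> \<beta> \<eta>) j y = Pj p q \<alpha> \<beta> \<eta> j y" .
qed



lemma Lb_deriv:
  assumes "0 < \<alpha>"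
  shows "(Lb p \<alpha> \<beta> has_derivative (\<lambda>v. (\<Sum>n\<in>UNIV. v $ n * (p * (x $ n) * af p \<alpha> (x $ n))) + 0)) (at (x::real^'n))"
  unfolding Lb_def[abs_def] by (intro has_derivative_add L_deriv assms has_derivative_const)

lemma Sb_deriv:
  assumes "2 \<le> q"
  shows "(Sb q \<eta> has_derivative (\<lambda>v. 0 + (\<Sum>n\<in>UNIV. v $ n * (q * dq q (x $ n))))) (at (x::real^'n))"
  unfolding Sb_def[abs_def] by (intro has_derivative_add S_deriv assms has_derivative_const)

lemma Lb_zero: "0 < \<alpha> \<Longrightarrow> Lb p \<alpha> \<beta> (0::real^'n) = \<beta> powr p"
  by (simp add: Lb_def lp_zero)

lemma Sb_zero: "0 < q \<Longrightarrow> Sb q \<eta> (0::real^'n) = \<eta> powr q"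
  by (simp add: Sb_def)

lemma dq_zero: "dq q 0 = 0" by (simp add: dq_def)

lemma Pj_deriv0:
  assumes p: "0 < p" "p < 2" and q: "2 \<le> q" and pos: "0 < \<alpha>" "0 < \<beta>" "0 < \<eta>"
  shows "(Pj p q \<alpha> \<beta> \<eta> j has_derivative
     (\<lambda>h. h $ j * (af p \<alpha> 0 * inverse (\<beta> powr p) - (if q = 2 then 1 else 0) * inverse (\<eta> powr q)))) (at (0::real^'n))"
proof -
  define d0 where "d0 = (if q = 2 then 1 else (0::real))"
  obtain Da where Da: "(af p \<alpha> has_real_derivative Da) (at 0)" using af_deriv[OF pos(1)] by blast
  have f1: "((\<lambda>y::real^'n. y $ j) has_derivative (\<lambda>h. h $ j)) (at 0)"
    by (rule bounded_linear_imp_has_derivative[OF bounded_linear_vec_nth])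
  have f2: "((\<lambda>y::real^'n. af p \<alpha> (y $ j)) has_derivative (\<lambda>h. h $ j * Da)) (at 0)"
    by (rule comp_nth) (use Da in simp)
  have f4: "((\<lambda>y::real^'n. dq q (y $ j)) has_derivative (\<lambda>h. h $ j * d0)) (at 0)"
    by (rule comp_nth) (use dq_deriv0[OF q] in \<open>simp add: d0_def\<close>)
  have L0: "Lb p \<alpha> \<beta> (0::real^'n) \<noteq> 0" using Lb_pos[OF p pos(1,2), of "0::real^'n"] by linarith
  have S0: "Sb q \<eta> (0::real^'n) \<noteq> 0" using Sb_pos[OF pos(3), of q "0::real^'n"] by linarith
  have e: "Pj p q \<alpha> \<beta> \<eta> j = (\<lambda>y::real^'n. (y $ j * af p \<alpha> (y $ j)) * inverse (Lb p \<alpha> \<beta> y) - dq q (y $ j) * inverse (Sb q \<eta> y))"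
    by (rule ext) (simp add: Pj_def)
  note D = has_derivative_diff[OF has_derivative_mult[OF has_derivative_mult[OF f1 f2] Deriv.has_derivative_inverse[OF L0 Lb_deriv[OF pos(1)]]]
                               has_derivative_mult[OF f4 Deriv.has_derivative_inverse[OF S0 Sb_deriv[OF q]]]]
  show ?thesis unfolding e
    by (rule has_derivative_eq_rhs[OF D]) (use q pos in \<open>auto simp: d0_def Lb_zero Sb_zero dq_zero algebra_simps\<close>)
qed



lemma hessian_eq:
  assumes p: "0 < p" "p < 2" and q: "2 \<le> q" and pos: "0 < \<alpha>" "0 < \<beta>" "0 < \<eta>"
  shows "hessian (SPOQ p q \<alpha> \<beta> \<eta> :: real^'n \<Rightarrow> real) 0 =
    (\<chi> i j. if i = j then (af p \<alpha> 0 * inverse (\<beta> powr p) - (if q = 2 then 1 else 0) * inverse (\<eta> powr q)) else 0)"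
  unfolding hessian_def partial_eq[OF p q pos]
  unfolding frechet_derivative_at[OF Pj_deriv0[OF p q pos], symmetric]
  by (rule vec_eq_iff[THEN iffD2]) (auto simp: axis_def)

lemma pos_def_diag:
  assumes "0 < c"
  shows "pos_def_matrix ((\<chi> i j. if i = j then c else 0) :: real^'n^'n)"
  unfolding pos_def_matrix_def
proof (intro conjI allI impI)
  show "transpose ((\<chi> i j. if i = j then c else 0) :: real^'n^'n) = (\<chi> i j. if i = j then c else 0)"
    by (auto simp: transpose_def vec_eq_iff)
  fix v :: "real^'n" assume v: "v \<noteq> 0"
  have rowsum: "(\<Sum>j\<in>UNIV. (if i = j then c else 0) * v $ j) = c * v $ i" for i
  proof -
    have e: "(\<lambda>j. (if i = j then c else 0) * v $ j) = (\<lambda>j. if i = j then c * v $ j else 0)" by auto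
    show ?thesis unfolding e by simp
  qed
  have mv: "((\<chi> i j. if i = j then c else 0) :: real^'n^'n) *v v = c *\<^sub>R v"
    unfolding matrix_vector_mult_def vec_eq_iff by (simp add: rowsum)
  have "v \<bullet> (c *\<^sub>R v) = c * (norm v)\<^sup>2" by (simp add: power2_norm_eq_inner)
  moreover have "0 < (norm v)\<^sup>2" using v by simp
  ultimately show "0 < v \<bullet> (((\<chi> i j. if i = j then c else 0) :: real^'n^'n) *v v)"
    using assms mv by simp
qed

theorem proposition1:
  fixes p q \<alpha> \<beta> \<eta> :: real
  assumes "0 < p" "p < 2" "2 \<le> q"
    and "0 < \<alpha>" "0 < \<beta>" "0 < \<eta>"
    and "(q = 2 \<and> \<eta>\<^sup>2 * \<alpha> powr (p - 2) > \<beta> powr p) \<or> q > 2"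
  shows "twice_differentiable_at (SPOQ p q \<alpha> \<beta> \<eta> :: real^'n \<Rightarrow> real) 0
    \<and> pos_def_matrix (hessian (SPOQ p q \<alpha> \<beta> \<eta> :: real^'n \<Rightarrow> real) 0)
    \<and> (\<exists>e>0. \<forall>x::real^'n. norm x < e \<longrightarrow> SPOQ p q \<alpha> \<beta> \<eta> 0 \<le> SPOQ p q \<alpha> \<beta> \<eta> x)
    \<and> (\<eta>\<^sup>2 \<ge> \<beta>\<^sup>2 * max (8 * \<alpha> powr (2 - p) / (p * (2 + p) * \<beta> powr (2 - p)))
                         (1 / (2 powr (p / 2) - 1) powr (2 / p))
       \<longrightarrow> (\<forall>x::real^'n. SPOQ p q \<alpha> \<beta> \<eta> 0 \<le> SPOQ p q \<alpha> \<beta> \<eta> x))"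
proof (intro conjI)
  note p = assms(1,2) and q = assms(3) and pos = assms(4,5,6) and H7 = assms(7)
  show "twice_differentiable_at (SPOQ p q \<alpha> \<beta> \<eta> :: real^'n \<Rightarrow> real) 0"
    unfolding twice_differentiable_at_def
  proof (intro conjI allI exI[of _ 1] ballI)
    show "(0::real) < 1" by simp
    fix y :: "real^'n"
    show "SPOQ p q \<alpha> \<beta> \<eta> differentiable (at y)"
      using Psi_deriv[OF p q pos, of y] by (rule differentiableI)
  next
    fix j :: 'n
    show "partial_deriv (SPOQ p q \<alpha> \<beta> \<eta> :: real^'n \<Rightarrow> real) j differentiable (at 0)"
      unfolding partial_eq[OF p q pos] using Pj_deriv0[OF p q pos] by (rule differentiableI)
  qed
  show "pos_def_matrix (hessian (SPOQ p q \<alpha> \<beta> \<eta> :: real^'n \<Rightarrow> real) 0)"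
    unfolding hessian_eq[OF p q pos]
  proof (rule pos_def_diag)
    have af0: "af p \<alpha> 0 = \<alpha> powr (p - 2)" using pos by (simp add: af_def sq_powr algebra_simps)
    show "0 < af p \<alpha> 0 * inverse (\<beta> powr p) - (if q = 2 then 1 else 0) * inverse (\<eta> powr q)"
    proof (cases "q = 2")
      case True
      then have H: "\<beta> powr p < \<eta>\<^sup>2 * \<alpha> powr (p - 2)" using H7 by simp
      have e2: "\<eta> powr 2 = \<eta>\<^sup>2" using pos by (simp add: powr_numeral)
      have b: "0 < \<beta> powr p" "0 < \<eta>\<^sup>2" using pos by auto
      have "inverse (\<eta>\<^sup>2) < \<alpha> powr (p - 2) * inverse (\<beta> powr p)"
        using H b by (simp add: field_simps)
      then show ?thesis by (simp add: True af0 e2)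
    next
      case False
      then show ?thesis using pos by (simp add: af0)
    qed
  qed
  show "\<exists>e>0. \<forall>x::real^'n. norm x < e \<longrightarrow> SPOQ p q \<alpha> \<beta> \<eta> 0 \<le> SPOQ p q \<alpha> \<beta> \<eta> x"
    by (rule local_min[OF p q pos H7])
  show "\<eta>\<^sup>2 \<ge> \<beta>\<^sup>2 * max (8 * \<alpha> powr (2 - p) / (p * (2 + p) * \<beta> powr (2 - p)))
                         (1 / (2 powr (p / 2) - 1) powr (2 / p))
       \<longrightarrow> (\<forall>x::real^'n. SPOQ p q \<alpha> \<beta> \<eta> 0 \<le> SPOQ p q \<alpha> \<beta> \<eta> x)"
    using global_min[OF p q pos] by blast
qed

end
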